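(* Let $q$ be even and let $\mathcal U$ be a non-classical orthogonal Buekenhout–Metz unital with respect to $\ell_\infty$ in $\mathrm{PG}(2,q^2)$. Let $P$ be a point with $P\notin\mathcal U\cup\ell_\infty$. Then (1) the points of $\mathrm{pedal}(P)$ lie on the lines of a Baer pencil whose vertex is a point of $\ell_\infty$, and (2) $\mathrm{pedal}(P)$ is an arc.
   Context: Points of $\mathrm{PG}(2,q^2)$ have homogeneous coordinates $(x,y,z)$; $\ell_\infty$ is the line $z=0$. For $q$ even, an orthogonal Buekenhout–Metz unital with respect to $\ell_\infty$ is (up to a collineation fixing $\ell_\infty$) a set $\mathcal U_{\alpha\beta}=\{(x,\alpha x^2+\beta x^{q+1}+r,1): x\in\mathbb{F}_{q^2}, r\in\mathbb{F}_q\}\cup\{(0,1,0)\}$ where $\alpha,\beta\in\mathbb{F}_{q^2}$, $\beta\notin\mathbb{F}_q$ and $\alpha^{q+1}/(\beta^q+\beta)^2$ has absolute trace $0$ in $\mathbb{F}_q$ (originally defined as the unitals corresponding to an elliptic cone containing a spread line in the Bruck–Bose representation in $\mathrm{PG}(4,q)$ with respect to $\ell_\infty$); it is non-classical iff $\alpha\neq0$. A unital is a set of $q^3+1$ points meeting every line in $1$ or $q+1$ points; a tangent is a line meeting it in exactly one point. For $P$ not on the unital, the $q+1$ tangents through $P$ meet the unital in the feet of $P$, forming $\mathrm{pedal}(P)$. An arc is a point set meeting every line in at most $2$ points. A Baer subline is a set of $q+1$ points of a line projectively equivalent to $\{(a,b,0):(a,b)\in\mathbb{F}_q^2\setminus\{0\}\}$;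 a Baer pencil is the set of $q+1$ lines joining a vertex point to the points of a Baer subline. *)

theory Defs
  imports Main
begin

type_synonym 'a vec3 = "'a \<times> 'a \<times> 'a"

definition scale3 :: "'a::field \<Rightarrow> 'a vec3 \<Rightarrow> 'a vec3" where
  "scale3 c v = (c * fst v, c * fst (snd v), c * snd (snd v))"

definition inner3 :: "'a::field vec3 \<Rightarrow> 'a vec3 \<Rightarrow> 'a" where
  "inner3 l v = fst l * fst v + fst (snd l) * fst (snd v) + snd (snd l) * snd (snd v)"

definition proj_pt :: "'a::field vec3 \<Rightarrow> 'a vec3 set" where
  "proj_pt v = (\<lambda>c. scale3 c v) ` {c. c \<noteq> 0}"

definition points :: "'a::field vec3 set set" where
  "points = {proj_pt v | v. v \<noteq> (0,0,0)}"

definition proj_line :: "'a::field vec3 \<Rightarrow> 'a vec3 set set" where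
  "proj_line l = {proj_pt v | v. v \<noteq> (0,0,0) \<and> inner3 l v = 0}"

definition lines :: "'a::field vec3 set set set" where
  "lines = {proj_line l | l. l \<noteq> (0,0,0)}"

definition line_inf :: "'a::field vec3 set set" where
  "line_inf = proj_line (0,0,1)"

definition collineation :: "('a::field vec3 set \<Rightarrow> 'a vec3 set) \<Rightarrow> bool" where
  "collineation f \<longleftrightarrow> bij_betw f points points \<and> (\<forall>L\<in>lines. f ` L \<in> lines)"

definition subfield_q :: "nat \<Rightarrow> 'a::field set" where
  "subfield_q q = {r. r ^ q = r}"

definition abs_trace :: "nat \<Rightarrow> 'a::field \<Rightarrow> 'a" where
  "abs_trace h t = (\<Sum>i<h. t ^ (2 ^ i))"

definition BM_set :: "nat \<Rightarrow> 'a::field \<Rightarrow> 'a \<Rightarrow> 'a vec3 set set" where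
  "BM_set q \<alpha> \<beta> =
     {proj_pt (x, \<alpha> * x^2 + \<beta> * x^(q+1) + r, 1) | x r. r \<in> subfield_q q}
     \<union> {proj_pt (0,1,0)}"

definition nonclassical_orth_BM_unital :: "nat \<Rightarrow> nat \<Rightarrow> 'a::field vec3 set set \<Rightarrow> bool" where
  "nonclassical_orth_BM_unital q h U \<longleftrightarrow>
     (\<exists>f \<alpha> \<beta>. collineation f \<and> f ` line_inf = line_inf \<and>
        \<beta> \<notin> subfield_q q \<and> \<alpha> \<noteq> 0 \<and>
        abs_trace h (\<alpha> ^ (q+1) / (\<beta> ^ q + \<beta>) ^ 2) = 0 \<and>
        U = f ` BM_set q \<alpha> \<beta>)"

definition pedal :: "'a::field vec3 set set \<Rightarrow> 'a vec3 set \<Rightarrow> 'a vec3 set set" where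
  "pedal U P = {Q. \<exists>L\<in>lines. P \<in> L \<and> L \<inter> U = {Q}}"

definition is_arc :: "'a::field vec3 set set \<Rightarrow> bool" where
  "is_arc S \<longleftrightarrow> S \<subseteq> points \<and> (\<forall>L\<in>lines. card (L \<inter> S) \<le> 2)"

definition std_baer_subline :: "nat \<Rightarrow> 'a::field vec3 set set" where
  "std_baer_subline q =
     {proj_pt (a, b, 0) | a b. a \<in> subfield_q q \<and> b \<in> subfield_q q \<and> (a, b) \<noteq> (0, 0)}"

definition baer_subline :: "nat \<Rightarrow> 'a::field vec3 set set \<Rightarrow> bool" where
  "baer_subline q B \<longleftrightarrow> (\<exists>f. collineation f \<and> B = f ` std_baer_subline q)"

definition baer_pencil :: "nat \<Rightarrow> 'a::field vec3 set \<Rightarrow> 'a vec3 set set set \<Rightarrow> bool" where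
  "baer_pencil q V Ls \<longleftrightarrow> V \<in> points \<and>
     (\<exists>B. baer_subline q B \<and> (\<forall>m\<in>lines. B \<subseteq> m \<longrightarrow> V \<notin> m) \<and>
          Ls = {L \<in> lines. V \<in> L \<and> (\<exists>Y\<in>B. Y \<in> L)})"

end

theory Submission
  imports Defs
begin

lemma fermat_fin:
  fixes x :: "'a::{field,finite}" assumes "x \<noteq> 0"
  shows "x ^ (card (UNIV::'a set) - 1) = 1"
proof -
  let ?A = "UNIV - {0::'a}"
  have bij: "bij_betw (\<lambda>y. x*y) ?A ?A"
    by (rule bij_betw_byWitness[where f'="\<lambda>y. y/x"]) (use assms in auto)
  have "prod (\<lambda>y. x*y) ?A = prod id ?A"
    using prod.reindex_bij_betw[OF bij, of id] by simp
  moreover have "prod (\<lambda>y. x*y) ?A = x ^ card ?A * prod id ?A"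
    by (simp add: prod.distrib)
  moreover have "prod id ?A \<noteq> 0" by simp
  moreover have "card ?A = card (UNIV::'a set) - 1"
    by (simp add: card_Diff_singleton)
  ultimately show ?thesis by simp
qed

lemma fermat_fin2:
  fixes x :: "'a::{field,finite}"
  shows "x ^ card (UNIV::'a set) = x"
proof (cases "x = 0")
  case True
  have "card (UNIV::'a set) > 0" by (simp add: finite_UNIV_card_ge_0)
  then show ?thesis using True by (simp add: zero_power)
next
  case False
  have "card (UNIV::'a set) > 0" by (simp add: finite_UNIV_card_ge_0)
  then have "x ^ card (UNIV::'a set) = x * x ^ (card (UNIV::'a set) - 1)"
    by (metis Suc_diff_1 power_Suc)
  then show ?thesis using fermat_fin[OF False] by simp
qed

context fixes dummy :: "'a::field" assumes two: "(2::'a) = 0" begin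
lemma nb0: "numeral (num.Bit0 n) = (0::'a)"
  by (metis mult_2 mult_zero_left numeral_Bit0 two)
lemma nb1: "numeral (num.Bit1 n) = (1::'a)"
  by (metis add_0 nb0 numeral_Bit0 numeral_Bit1)
lemma c2eq: "((x::'a) = y) = (x + y = 0)"
  by (metis add_diff_cancel_right' mult_2 mult_zero_left two)
lemma neg2: "- (x::'a) = x"
  by (metis add_diff_cancel_left' c2eq diff_0 diff_minus_eq_add)
lemma sq_add2: "((x::'a) + y)^2 = x^2 + y^2"
  apply (subst c2eq) apply (simp add: algebra_simps power2_eq_square) apply (simp add: nb0 nb1) done
lemma pow2_add: "((x::'a) + y)^(2^i) = x^(2^i) + y^(2^i)"
proof (induction i)
  case 0 then show ?case by simp
next
  case (Suc i)
  have "(x+y)^(2^Suc i) = ((x+y)^(2^i))^2" by (simp add: power_mult[symmetric] mult.commute)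
  also have "... = (x^(2^i))^2 + (y^(2^i))^2" using Suc sq_add2 by simp
  also have "... = x^(2^Suc i) + y^(2^Suc i)" by (simp add: power_mult[symmetric] mult.commute)
  finally show ?case .
qed
lemma telescope: "(\<Sum>i<k. ((z::'a)^2 + z)^(2^i)) = z^(2^k) + z"
proof (induction k)
  case 0 then show ?case using c2eq[of z z] by simp
next
  case (Suc k)
  have e: "(z^2 + z)^(2^k) = z^(2^Suc k) + z^(2^k)"
    by (simp add: pow2_add power_mult[symmetric] mult.commute)
  show ?case using Suc e
    apply simp apply (subst c2eq) apply (simp add: algebra_simps) apply (simp add: nb0 nb1) done
qed
end

lemma scale3_simp[simp]: "scale3 c (x,y,z) = (c*x, c*y, c*z)"
  by (simp add: scale3_def)
lemma inner3_simp[simp]: "inner3 (l1,l2,l3) (x,y,z) = l1*x + l2*y + l3*z"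
  by (simp add: inner3_def)

lemma self_in_proj_pt: "v \<in> proj_pt v"
  unfolding proj_pt_def by (rule image_eqI[where x=1]) (auto simp: scale3_def)

lemma proj_pt_eqD: "proj_pt v = proj_pt w \<Longrightarrow> \<exists>c. c \<noteq> 0 \<and> v = scale3 c w"
  using self_in_proj_pt[of v] unfolding proj_pt_def by auto

lemma proj_pt_scale: fixes v :: "'a::field vec3" assumes "c \<noteq> 0"
  shows "proj_pt (scale3 c v) = proj_pt v"
proof -
  obtain x y z where v: "v = (x,y,z)" by (cases v) auto
  have "proj_pt (scale3 c v) \<subseteq> proj_pt v"
    unfolding proj_pt_def v using assms
    by (auto intro!: image_eqI[where x="_ * c"] simp: mult.assoc)
  moreover have "proj_pt v \<subseteq> proj_pt (scale3 c v)"
    unfolding proj_pt_def v using assms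
    by (auto intro!: image_eqI[where x="_ / c"] simp: mult.assoc)
  ultimately show ?thesis by blast
qed

lemma pt1_eq: fixes x :: "'a::field"
  assumes "proj_pt (x,y,1) = proj_pt (x',y',1)" shows "x = x' \<and> y = y'"
  using proj_pt_eqD[OF assms] by auto

lemma pt10_ne: fixes x :: "'a::field" shows "proj_pt (x,y,1) \<noteq> proj_pt (x',y',0)"
  using proj_pt_eqD[of "(x,y,1)" "(x',y',0)"] by auto

lemma on_line_iff: fixes v :: "'a::field vec3" assumes "v \<noteq> (0,0,0)"
  shows "proj_pt v \<in> proj_line l \<longleftrightarrow> inner3 l v = 0"
proof
  assume "proj_pt v \<in> proj_line l"
  then obtain w where w: "proj_pt v = proj_pt w" "inner3 l w = 0" unfolding proj_line_def by auto
  obtain c where "v = scale3 c w" using proj_pt_eqD[OF w(1)] by auto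
  moreover have "inner3 l (scale3 c w) = c * inner3 l w"
    by (cases l, cases w) (simp add: algebra_simps)
  ultimately show "inner3 l v = 0" using w(2) by simp
next
  assume "inner3 l v = 0" then show "proj_pt v \<in> proj_line l"
    unfolding proj_line_def using assms by blast
qed

lemma proj_pt_points: "v \<noteq> (0,0,0) \<Longrightarrow> proj_pt v \<in> points"
  unfolding points_def by blast

lemma proj_line_sub: "proj_line l \<subseteq> points"
  unfolding proj_line_def points_def by auto

lemma lines_sub: "L \<in> lines \<Longrightarrow> L \<subseteq> points"
  unfolding lines_def using proj_line_sub by auto

lemma affine_rep: fixes P :: "'a::field vec3 set"
  assumes "P \<in> points" "P \<notin> line_inf" shows "\<exists>a b. P = proj_pt (a,b,1)"
proof -
  obtain x y z where P: "P = proj_pt (x,y,z)" "(x,y,z) \<noteq> (0,0,0)"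
    using assms(1) unfolding points_def by auto
  have "z \<noteq> 0" using assms(2) P on_line_iff[OF P(2), of "(0,0,1)"] unfolding line_inf_def by auto
  then have "proj_pt (x,y,z) = proj_pt (scale3 (1/z) (x,y,z))" using proj_pt_scale[of "1/z" "(x,y,z)"] by simp
  also have "scale3 (1/z) (x,y,z) = (x/z, y/z, 1)" using `z \<noteq> 0` by simp
  finally show ?thesis using P by auto
qed

lemma coll_inj: "collineation f \<Longrightarrow> inj_on f points"
  unfolding collineation_def bij_betw_def by auto

lemma finite_lines: "finite (lines :: 'a::{field,finite} vec3 set set set)"
  by (rule finite)

lemma line_surj: fixes f :: "'a::{field,finite} vec3 set \<Rightarrow> 'a vec3 set"
  assumes "collineation f" "L \<in> lines" shows "\<exists>L0\<in>lines. L = f ` L0"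
proof -
  have sub: "(\<lambda>X. f ` X) ` lines \<subseteq> lines" using assms(1) unfolding collineation_def by auto
  have "inj_on (\<lambda>X. f ` X) lines"
  proof (rule inj_onI)
    fix X Y assume XY: "X \<in> lines" "Y \<in> lines" "f ` X = f ` Y"
    then show "X = Y" using inj_on_image_eq_iff[OF coll_inj[OF assms(1)] lines_sub[OF XY(1)] lines_sub[OF XY(2)]] by simp
  qed
  then have "(\<lambda>X. f ` X) ` lines = lines" using endo_inj_surj[OF finite_lines sub] by simp
  then have "L \<in> (\<lambda>X. f ` X) ` lines" using assms(2) by simp
  then show ?thesis by blast
qed

lemma coll_comp: assumes "collineation f" "collineation g" shows "collineation (f \<circ> g)"
proof -
  have "bij_betw (f \<circ> g) points points" using assms unfolding collineation_def
    using bij_betw_trans by blast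
  moreover have "(f \<circ> g) ` L \<in> lines" if "L \<in> lines" for L
  proof -
    have "g ` L \<in> lines" using assms(2) that unfolding collineation_def by blast
    then have "f ` (g ` L) \<in> lines" using assms(1) unfolding collineation_def by blast
    then show ?thesis by (simp add: image_comp)
  qed
  ultimately show ?thesis unfolding collineation_def by blast
qed

lemma pedal_image: fixes f :: "'a::{field,finite} vec3 set \<Rightarrow> 'a vec3 set"
  assumes f: "collineation f" and U0: "U0 \<subseteq> points" and P0: "P0 \<in> points"
  shows "pedal (f ` U0) (f P0) \<subseteq> f ` pedal U0 P0"
proof
  fix Q assume "Q \<in> pedal (f ` U0) (f P0)"
  then obtain L where L: "L \<in> lines" "f P0 \<in> L" "L \<inter> f ` U0 = {Q}" unfolding pedal_def by blast
  obtain L0 where L0: "L0 \<in> lines" "L = f ` L0" using line_surj[OF f L(1)] by blast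
  have inj: "inj_on f points" using coll_inj[OF f] .
  have L0p: "L0 \<subseteq> points" using lines_sub[OF L0(1)] .
  have "P0 \<in> L0" using L(2) L0(2) inj_on_image_mem_iff[OF inj P0 L0p] by blast
  have "Q \<in> f ` U0" using L(3) by blast
  then obtain Q0 where Q0: "Q0 \<in> U0" "Q = f Q0" by blast
  have "f Q0 \<in> f ` L0" using L(3) L0(2) Q0 by blast
  then have "Q0 \<in> L0" using inj_on_image_mem_iff[OF inj _ L0p] Q0 U0 by blast
  have "L0 \<inter> U0 = {Q0}"
  proof -
    have "Y = Q0" if "Y \<in> L0" "Y \<in> U0" for Y
    proof -
      have "f Y \<in> L \<inter> f ` U0" using that L0(2) by blast
      then have "f Y = f Q0" using L(3) Q0 by blast
      moreover have "Y \<in> points" "Q0 \<in> points" using that Q0 U0 by blast+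
      ultimately show ?thesis using inj_onD[OF inj] by blast
    qed
    then show ?thesis using `Q0 \<in> L0` Q0 by blast
  qed
  then have "Q0 \<in> pedal U0 P0" unfolding pedal_def using L0(1) `P0 \<in> L0` by blast
  then show "Q \<in> f ` pedal U0 P0" using Q0 by blast
qed

lemma pedal_points: "pedal U P \<subseteq> points"
  unfolding pedal_def using lines_sub by blast

lemma arc_transfer: fixes f :: "'a::{field,finite} vec3 set \<Rightarrow> 'a vec3 set"
  and S S0 :: "'a vec3 set set"
  assumes f: "collineation f" and S0: "S0 \<subseteq> points"
    and arc0: "\<forall>L0\<in>lines. card (L0 \<inter> S0) \<le> 2"
    and S: "S \<subseteq> f ` S0" "S \<subseteq> points"
  shows "is_arc S"
  unfolding is_arc_def
proof (intro conjI ballI)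
  show "S \<subseteq> points" by fact
  fix L :: "'a vec3 set set" assume "L \<in> lines"
  then obtain L0 where L0: "L0 \<in> lines" "L = f ` L0" using line_surj[OF f] by blast
  have "L \<inter> S \<subseteq> f ` L0 \<inter> f ` S0"
    using S(1) L0 by blast
  then have "L \<inter> S \<subseteq> f ` (L0 \<inter> S0)"
    using inj_on_image_Int[OF coll_inj[OF f] lines_sub[OF L0(1)] S0] by simp
  then have "card (L \<inter> S) \<le> card (f ` (L0 \<inter> S0))" by (intro card_mono) (rule finite)
  also have "... \<le> card (L0 \<inter> S0)" by (rule card_image_le) (rule finite)
  also have "... \<le> 2" using arc0 L0 by auto
  finally show "card (L \<inter> S) \<le> 2" .
qed

lemma std_sub: "std_baer_subline q \<subseteq> points"
  unfolding std_baer_subline_def using proj_pt_points by fastforce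

lemma pencil_transfer: fixes f :: "'a::{field,finite} vec3 set \<Rightarrow> 'a vec3 set"
  and S S0 :: "'a vec3 set set"
  assumes f: "collineation f" and finf: "f ` line_inf = line_inf"
    and V0: "V0 \<in> line_inf" and bp: "baer_pencil q V0 Ls0"
    and S0: "S0 \<subseteq> \<Union>Ls0" and S: "S \<subseteq> f ` S0"
  shows "\<exists>V Ls. V \<in> line_inf \<and> baer_pencil q V Ls \<and> S \<subseteq> \<Union>Ls"
proof -
  obtain B0 f0 where V0p: "V0 \<in> points" and f0: "collineation f0" and B0: "B0 = f0 ` std_baer_subline q"
    and nm: "\<forall>m\<in>lines. B0 \<subseteq> m \<longrightarrow> V0 \<notin> m"
    and Ls0: "Ls0 = {L \<in> lines. V0 \<in> L \<and> (\<exists>Y\<in>B0. Y \<in> L)}"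
    using bp unfolding baer_pencil_def baer_subline_def by blast
  have inj: "inj_on f points" using coll_inj[OF f] .
  have B0p: "B0 \<subseteq> points" using B0 f0 std_sub unfolding collineation_def bij_betw_def by blast
  define V where "V = f V0"
  define B where "B = f ` B0"
  define Ls where "Ls = {L \<in> lines. V \<in> L \<and> (\<exists>Y\<in>B. Y \<in> L)}"
  have "V \<in> line_inf" using V0 finf V_def by blast
  moreover have "V \<in> points" using V0p f unfolding V_def collineation_def bij_betw_def by blast
  moreover have "baer_subline q B"
    unfolding baer_subline_def using coll_comp[OF f f0] B_def B0 by (auto simp: image_comp)
  moreover have "\<forall>m\<in>lines. B \<subseteq> m \<longrightarrow> V \<notin> m"
  proof (intro ballI impI)
    fix m assume m: "m \<in> lines" "B \<subseteq> m"
    obtain m0 where m0: "m0 \<in> lines" "m = f ` m0" using line_surj[OF f m(1)] by auto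
    have m0p: "m0 \<subseteq> points" using lines_sub[OF m0(1)] .
    have "B0 \<subseteq> m0"
    proof
      fix x assume "x \<in> B0"
      then have "f x \<in> f ` m0" using m(2) m0(2) B_def by blast
      then show "x \<in> m0" using inj_on_image_mem_iff[OF inj _ m0p] `x \<in> B0` B0p by blast
    qed
    then have "V0 \<notin> m0" using nm m0 by auto
    then show "V \<notin> m" using m0(2) V_def inj_on_image_mem_iff[OF inj V0p m0p] by blast
  qed
  moreover have "S \<subseteq> \<Union>Ls"
  proof
    fix Q assume "Q \<in> S"
    then obtain Q0 where Q0: "Q0 \<in> S0" "Q = f Q0" using S by auto
    then obtain L0 Y0 where L0: "L0 \<in> lines" "V0 \<in> L0" "Y0 \<in> B0" "Y0 \<in> L0" "Q0 \<in> L0"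
      using S0 Ls0 by auto
    have "f ` L0 \<in> lines" using f L0(1) unfolding collineation_def by auto
    then have "f ` L0 \<in> Ls" unfolding Ls_def B_def V_def using L0 by auto
    then show "Q \<in> \<Union>Ls" using Q0 L0 by auto
  qed
  ultimately show ?thesis unfolding baer_pencil_def Ls_def by blast
qed

lemma lin_collineation:
  fixes M Mi :: "'a::field vec3 \<Rightarrow> 'a vec3"
  assumes sc: "\<And>c v. M (scale3 c v) = scale3 c (M v)"
    and inv1: "\<And>v. Mi (M v) = v" and inv2: "\<And>v. M (Mi v) = v"
    and tr: "\<And>l v. inner3 l (Mi v) = inner3 (Mt l) v"
  shows "collineation (\<lambda>X. M ` X)"
proof -
  have img: "M ` proj_pt v = proj_pt (M v)" for v
    unfolding proj_pt_def image_image sc by simp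
  have M0: "M (0,0,0) = (0,0,0)" using sc[of 0 "(0,0,0)"] by (cases "M (0,0,0)") simp
  have Mnz: "M v \<noteq> (0,0,0)" if "v \<noteq> (0,0,0)" for v
    using that inv1[of v] inv1[of "(0,0,0)"] M0 by metis
  have injM: "inj M" by (metis inv1 injI)
  have bij: "bij_betw (\<lambda>X. M ` X) points points"
  proof (rule bij_betw_imageI)
    show "inj_on (\<lambda>X. M ` X) points" using injM by (auto intro!: inj_onI simp: inj_image_eq_iff)
    show "(\<lambda>X. M ` X) ` points = points"
    proof
      show "(\<lambda>X. M ` X) ` points \<subseteq> points"
      proof
        fix Y assume "Y \<in> (\<lambda>X. M ` X) ` points"
        then obtain v where v: "Y = M ` proj_pt v" "v \<noteq> (0,0,0)" unfolding points_def by blast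
        then show "Y \<in> points" using img Mnz proj_pt_points by metis
      qed
      show "points \<subseteq> (\<lambda>X. M ` X) ` points"
      proof
        fix X :: "'a vec3 set" assume "X \<in> points"
        then obtain w where w: "X = proj_pt w" "w \<noteq> (0,0,0)" unfolding points_def by auto
        have "Mi w \<noteq> (0,0,0)" using w(2) inv2[of w] M0 by metis
        then have "proj_pt (Mi w) \<in> points" by (rule proj_pt_points)
        moreover have "M ` proj_pt (Mi w) = X" using img inv2 w by simp
        ultimately show "X \<in> (\<lambda>X. M ` X) ` points" by force
      qed
    qed
  qed
  have lines: "(\<lambda>X. M ` X) ` L \<in> lines" if Lin: "L \<in> lines" for L
  proof -
    obtain l where l: "L = proj_line l" "l \<noteq> (0,0,0)" using Lin unfolding lines_def by blast
    have "Mt l \<noteq> (0,0,0)"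
    proof
      assume "Mt l = (0,0,0)"
      then have z: "inner3 l u = 0" for u using tr[of l "M u"] inv1 by (simp add: inner3_def)
      obtain l1 l2 l3 where "l = (l1,l2,l3)" by (cases l) auto
      then show False using z[of "(1,0,0)"] z[of "(0,1,0)"] z[of "(0,0,1)"] l(2) by simp
    qed
    moreover have "(\<lambda>X. M ` X) ` proj_line l = proj_line (Mt l)"
    proof
      show "(\<lambda>X. M ` X) ` proj_line l \<subseteq> proj_line (Mt l)"
      proof
        fix Y assume "Y \<in> (\<lambda>X. M ` X) ` proj_line l"
        then obtain v where v: "Y = M ` proj_pt v" "v \<noteq> (0,0,0)" "inner3 l v = 0"
          unfolding proj_line_def by blast
        have "inner3 (Mt l) (M v) = 0" using tr[of l "M v"] inv1 v(3) by simp
        then show "Y \<in> proj_line (Mt l)" unfolding proj_line_def using v img Mnz by blast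
      qed
      show "proj_line (Mt l) \<subseteq> (\<lambda>X. M ` X) ` proj_line l"
      proof
        fix X :: "'a vec3 set" assume "X \<in> proj_line (Mt l)"
        then obtain w where w: "X = proj_pt w" "w \<noteq> (0,0,0)" "inner3 (Mt l) w = 0"
          unfolding proj_line_def by auto
        have "Mi w \<noteq> (0,0,0)" using w(2) inv2[of w] M0 by metis
        moreover have "inner3 l (Mi w) = 0" using tr w(3) by simp
        ultimately have "proj_pt (Mi w) \<in> proj_line l" unfolding proj_line_def by blast
        moreover have "M ` proj_pt (Mi w) = X" using img inv2 w by simp
        ultimately show "X \<in> (\<lambda>X. M ` X) ` proj_line l" by force
      qed
    qed
    ultimately show ?thesis unfolding lines_def l(1) by blast
  qed
  show ?thesis unfolding collineation_def using bij lines by auto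
qed


context fixes q h :: nat
  assumes qh: "q = 2^h" and h1: "1 \<le> h" and cardF: "card (UNIV::'a::{field,finite} set) = q^2"
begin

lemma q_pos: "0 < q" using qh by simp

lemma two_F: "(2::'a) = 0"
proof -
  have "(-1::'a)^(q^2) = -1" using fermat_fin2[of "-1::'a"] cardF by simp
  moreover have "even (q^2)" using qh h1 by (simp add: even_power)
  ultimately have "(1::'a) = -1" by simp
  then have "(1::'a) + 1 = 0" by (metis add.right_inverse)
  then show ?thesis by simp
qed

lemmas c2 = c2eq[OF two_F]
lemmas ng = neg2[OF two_F]
lemmas nbs = nb0[OF two_F] nb1[OF two_F]

lemma frob_add: "((x::'a) + y)^q = x^q + y^q"
  using pow2_add[OF two_F] qh by simp

lemma frob_frob: "((x::'a)^q)^q = x"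
proof -
  have "(x^q)^q = x^(q*q)" by (simp add: power_mult)
  also have "q*q = q^2" by (simp add: power2_eq_square)
  finally show ?thesis using fermat_fin2[of x] cardF by simp
qed

lemma frob_sq: "((x::'a)^2)^q = (x^q)^2"
  by (simp add: power_mult[symmetric] mult.commute)

lemma frob_0: "((x::'a)^q = 0) = (x = 0)"
  using q_pos by simp

lemma frob_inj: "(x::'a)^q = y^q \<Longrightarrow> x = y"
  by (metis frob_frob)

lemma aniso:
  fixes \<alpha> \<beta> w :: 'a
  assumes bq: "\<beta>^q \<noteq> \<beta>" and tr: "abs_trace h (\<alpha>^(q+1) / (\<beta>^q+\<beta>)^2) = 0" and w: "w \<noteq> 0"
  shows "\<alpha>*w^2 + \<alpha>^q*(w^q)^2 + (\<beta>^q+\<beta>)*(w*w^q) \<noteq> 0"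
proof
  assume H: "\<alpha>*w^2 + \<alpha>^q*(w^q)^2 + (\<beta>^q+\<beta>)*(w*w^q) = 0"
  define \<delta> where "\<delta> = \<beta>^q + \<beta>"
  have \<delta>0: "\<delta> \<noteq> 0" using bq c2[of "\<beta>^q" \<beta>] unfolding \<delta>_def by simp
  have \<delta>q: "\<delta>^q = \<delta>" unfolding \<delta>_def by (simp add: frob_add frob_frob add.commute)
  define W where "W = w^q"
  have W0: "W \<noteq> 0" using w q_pos by (simp add: W_def)
  have Wq: "W^q = w" unfolding W_def by (rule frob_frob)
  have Hs: "\<alpha>*w^2 + \<alpha>^q*W^2 = \<delta>*(w*W)"
    using H c2[of "\<alpha>*w^2 + \<alpha>^q*W^2" "\<delta>*(w*W)"] unfolding W_def \<delta>_def by simp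
  define \<zeta> where "\<zeta> = \<alpha>*w^2/(\<delta>*(w*W))"
  have \<zeta>q: "\<zeta>^q = \<alpha>^q*W^2/(\<delta>*(w*W))"
    unfolding \<zeta>_def by (simp add: power_divide power_mult_distrib frob_sq Wq \<delta>q W_def[symmetric] mult.commute)
  have s1: "\<zeta> + \<zeta>^q = 1"
    unfolding \<zeta>q unfolding \<zeta>_def using Hs \<delta>0 w W0 by (simp add: add_divide_distrib[symmetric])
  then have s1': "\<zeta>^q = \<zeta> + 1" using c2[of "\<zeta>^q" "\<zeta> + 1"] by (simp add: algebra_simps nbs)
  have s2: "\<zeta> * \<zeta>^q = \<alpha>^(q+1)/\<delta>^2"
    unfolding \<zeta>q unfolding \<zeta>_def using \<delta>0 w W0 by (simp add: field_simps power2_eq_square)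
  have "\<zeta>^2 + \<zeta> = \<alpha>^(q+1)/\<delta>^2" using s2 s1' by (simp add: algebra_simps power2_eq_square)
  then have "abs_trace h (\<alpha>^(q+1)/\<delta>^2) = \<zeta>^q + \<zeta>"
    unfolding abs_trace_def using telescope[OF two_F, of \<zeta> h] qh by simp
  then show False using tr s1 unfolding \<delta>_def by (simp add: add.commute)
qed

lemma ident1:
  fixes \<alpha> \<beta> m c A B M C x X t w W :: 'a
  shows "\<alpha>*(x+t*w)^2 + \<beta>*((x+t*w)*(X+t*W)) + m*(x+t*w) + c + (A*(X+t*W)^2 + B*((X+t*W)*(x+t*w)) + M*(X+t*W) + C)
   = (\<alpha>*x^2 + \<beta>*(x*X) + m*x + c + (A*X^2 + B*(X*x) + M*X + C)) + t*(t*(\<alpha>*w^2 + A*W^2 + (B+\<beta>)*(w*W))) + t*((m + (B+\<beta>)*X)*w + (M + (B+\<beta>)*x)*W)"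
  apply (subst c2) apply (simp add: algebra_simps power2_eq_square) apply (simp add: nbs) done

lemma ident2:
  fixes \<alpha> \<beta> A B x0 X0 a aq b bq :: 'a
  shows "(\<alpha>*(x0+a)^2 + A*(X0+aq)^2 + (B+\<beta>)*((x0+a)*(X0+aq))) + (\<alpha>*a^2 + A*aq^2 + (B+\<beta>)*(a*aq) + b + bq)
    = ((B+\<beta>)*X0*x0 + (B+\<beta>)*X0*a + b + \<alpha>*x0^2 + \<beta>*(x0*X0)) + ((B+\<beta>)*x0*X0 + (B+\<beta>)*x0*aq + bq + A*X0^2 + B*(X0*x0))"
  apply (subst c2) apply (simp add: algebra_simps power2_eq_square) apply (simp add: nbs) done

lemma Gq: "(\<alpha>*(x::'a)^2 + \<beta>*(x*x^q) + m*x + c)^q = \<alpha>^q*(x^q)^2 + \<beta>^q*(x^q*x) + m^q*x^q + c^q"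
  by (simp add: frob_add power_mult_distrib frob_sq frob_frob)

lemma pedal_core:
  fixes \<alpha> \<beta> a b :: 'a
  assumes bq: "\<beta>^q \<noteq> \<beta>"
    and an: "\<And>w. w \<noteq> 0 \<Longrightarrow> \<alpha>*w^2 + \<alpha>^q*(w^q)^2 + (\<beta>^q+\<beta>)*(w*w^q) \<noteq> 0"
    and Q0: "Q0 \<in> pedal (BM_set q \<alpha> \<beta>) (proj_pt (a,b,1))"
  shows "\<exists>u. Q0 = proj_pt (a+u, b + (\<beta>^q+\<beta>)*a^q*u + (\<beta>^q+\<beta>)*(u*u^q), 1) \<and>
     \<alpha>*u^2 + \<alpha>^q*(u^q)^2 + (\<beta>^q+\<beta>)*(u*u^q) = \<alpha>*a^2 + \<alpha>^q*(a^q)^2 + (\<beta>^q+\<beta>)*(a*a^q) + b + b^q"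
proof -
  define \<delta> where "\<delta> = \<beta>^q + \<beta>"
  have \<delta>0: "\<delta> \<noteq> 0" using bq c2[of "\<beta>^q" \<beta>] unfolding \<delta>_def by simp
  have \<delta>q: "\<delta>^q = \<delta>" unfolding \<delta>_def by (simp add: frob_add frob_frob add.commute)
  have pw: "(x::'a)^(q+1) = x*x^q" for x by simp
  obtain L where L: "L \<in> lines" "proj_pt (a,b,1) \<in> L" "L \<inter> BM_set q \<alpha> \<beta> = {Q0}"
    using Q0 unfolding pedal_def by blast
  obtain l where l: "L = proj_line l" "l \<noteq> (0,0,0)" using L(1) unfolding lines_def by blast
  obtain l1 l2 l3 where l123: "l = (l1,l2,l3)" by (cases l) auto
  have onL: "proj_pt (x,y,z) \<in> L \<longleftrightarrow> l1*x + l2*y + l3*z = 0" if "(x,y,z) \<noteq> (0,0,0)" for x y z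
    using on_line_iff[OF that, of l] l(1) l123 by simp
  have Peq: "l1*a + l2*b + l3 = 0" using L(2) onL[of a b 1] by simp
  have inU: "proj_pt (x, \<alpha>*x^2+\<beta>*x^(q+1)+r, 1) \<in> BM_set q \<alpha> \<beta>" if "r^q = r" for x r
    unfolding BM_set_def subfield_q_def using that by blast
  have infU: "proj_pt (0,1,0) \<in> BM_set q \<alpha> \<beta>" unfolding BM_set_def by blast
  show ?thesis
  proof (cases "l2 = 0")
    case True
    have "proj_pt (a, \<alpha>*a^2+\<beta>*a^(q+1)+0, 1) \<in> L \<inter> BM_set q \<alpha> \<beta>"
      using inU[of 0 a] onL[of a _ 1] Peq True q_pos by simp
    moreover have "proj_pt (0,1,0) \<in> L \<inter> BM_set q \<alpha> \<beta>" using onL[of 0 1 0] True infU by simp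
    ultimately have "proj_pt (a, \<alpha>*a^2+\<beta>*a^(q+1)+0, 1) = proj_pt (0::'a,1,0)" using L(3) by blast
    then show ?thesis using pt10_ne by blast
  next
    case False
    define m where "m = l1/l2"
    define c where "c = l3/l2"
    have onL2: "proj_pt (x,y,1) \<in> L \<longleftrightarrow> m*x + y + c = 0" for x y
    proof -
      have "l1*x + l2*y + l3*1 = l2*(m*x + y + c)" unfolding m_def c_def using False
        by (simp add: field_simps)
      then show ?thesis using onL[of x y 1] False by simp
    qed
    have PC: "m*a + b + c = 0" using onL2 L(2) by blast
    have Q0U: "Q0 \<in> BM_set q \<alpha> \<beta>" and Q0L: "Q0 \<in> L" using L(3) by blast+
    have "Q0 \<noteq> proj_pt (0,1,0)" using Q0L onL[of 0 1 0] False by auto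
    then obtain x0 r0 where x0: "Q0 = proj_pt (x0, \<alpha>*x0^2+\<beta>*x0^(q+1)+r0, 1)" and r0: "r0^q = r0"
      using Q0U unfolding BM_set_def subfield_q_def by blast
    define y0 where "y0 = \<alpha>*x0^2+\<beta>*(x0*x0^q)+r0"
    have x0': "Q0 = proj_pt (x0, y0, 1)" using x0 unfolding y0_def by simp
    have line0: "m*x0 + y0 + c = 0" using onL2 Q0L x0' by blast
    define G where "G x = \<alpha>*x^2 + \<beta>*(x*x^q) + m*x + c" for x
    have uniq: "x = x0" if gx: "(G x)^q = G x" for x
    proof -
      have "proj_pt (x, \<alpha>*x^2+\<beta>*x^(q+1)+G x, 1) \<in> BM_set q \<alpha> \<beta>" using inU gx by blast
      moreover have "m*x + (\<alpha>*x^2+\<beta>*x^(q+1)+G x) + c = 0" unfolding G_def pw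
        apply (simp add: algebra_simps) apply (simp add: nbs flip: mult_2) done
      then have "proj_pt (x, \<alpha>*x^2+\<beta>*x^(q+1)+G x, 1) \<in> L" using onL2 by blast
      ultimately have "proj_pt (x, \<alpha>*x^2+\<beta>*x^(q+1)+G x, 1) = Q0" using L(3) by blast
      then show ?thesis using pt1_eq x0' by metis
    qed
    have cval: "c = m*x0 + y0" using line0 c2[of c "m*x0+y0"] by (simp add: algebra_simps)
    have Gx0: "G x0 = r0" unfolding G_def cval y0_def
      apply (subst c2) apply (simp add: algebra_simps) apply (simp add: nbs) done
    have mval: "m = \<delta> * x0^q"
    proof (rule ccontr)
      assume "m \<noteq> \<delta> * x0^q"
      define e where "e = m + \<delta>*x0^q"
      have e0: "e \<noteq> 0" using `m \<noteq> \<delta> * x0^q` c2 unfolding e_def by blast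
      have \<beta>0: "\<beta> \<noteq> 0" using bq q_pos by auto
      define w where "w = \<beta>/e"
      have w0: "w \<noteq> 0" using \<beta>0 e0 unfolding w_def by simp
      define W where "W = w^q"
      define Qw where "Qw = \<alpha>*w^2 + \<alpha>^q*W^2 + \<delta>*(w*W)"
      have Qw0: "Qw \<noteq> 0" using an[OF w0] unfolding Qw_def W_def \<delta>_def .
      have Qwq: "Qw^q = Qw" unfolding Qw_def W_def
        by (simp add: frob_add power_mult_distrib frob_sq frob_frob \<delta>q algebra_simps)
      define t where "t = \<delta>/Qw"
      have tq: "t^q = t" unfolding t_def by (simp add: power_divide \<delta>q Qwq)
      have t0: "t \<noteq> 0" using \<delta>0 Qw0 unfolding t_def by simp
      have tQ: "t*Qw = \<delta>" using Qw0 unfolding t_def by simp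
      have ew: "e*w = \<beta>" using e0 unfolding w_def by simp
      have eqW: "(m^q + \<delta>*x0)*W = \<beta>^q"
      proof -
        have "e^q = m^q + \<delta>*x0" unfolding e_def by (simp add: frob_add power_mult_distrib \<delta>q frob_frob)
        then show ?thesis using ew W_def by (metis power_mult_distrib)
      qed
      define z where "z = t*w"
      have zq: "(x0 + z)^q = x0^q + t*W" unfolding z_def W_def by (simp add: frob_add power_mult_distrib tq)
      have "G (x0+z) + (G (x0+z))^q = 0"
      proof -
        have "G (x0+z) + (G (x0+z))^q = \<alpha>*(x0+t*w)^2 + \<beta>*((x0+t*w)*(x0^q+t*W)) + m*(x0+t*w) + c +
           (\<alpha>^q*(x0^q+t*W)^2 + \<beta>^q*((x0^q+t*W)*(x0+t*w)) + m^q*(x0^q+t*W) + c^q)"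
          unfolding G_def Gq zq[symmetric] z_def by simp
        also have "... = (G x0 + (G x0)^q) + t*(t*Qw) + t*((m + \<delta>*x0^q)*w + (m^q + \<delta>*x0)*W)"
          unfolding ident1 G_def Gq Qw_def \<delta>_def by (simp add: add.commute)
        also have "... = 0 + t*\<delta> + t*(\<beta> + \<beta>^q)"
          using Gx0 r0 tQ ew eqW two_F unfolding e_def by (simp add: c2[symmetric])
        also have "... = 0" unfolding \<delta>_def
          apply (subst c2[symmetric]) apply (simp add: algebra_simps) done
        finally show ?thesis .
      qed
      then have "(G (x0+z))^q = G (x0+z)" using c2 by (metis add.commute)
      then have "x0 + z = x0" by (rule uniq)
      then have "z = 0" by simp
      then show False using t0 w0 unfolding z_def by simp
    qed
    define u where "u = x0 + a"
    have xu: "a + u = x0" unfolding u_def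
      apply (subst c2) apply (simp add: algebra_simps) apply (simp add: nbs) done
    have uq: "u^q = x0^q + a^q" unfolding u_def by (simp add: frob_add)
    have bval: "c = m*a + b" using PC c2[of c "m*a+b"] by (simp add: algebra_simps)
    have y0val: "y0 = \<delta>*x0^q*x0 + \<delta>*x0^q*a + b"
    proof -
      have "y0 + (m*x0+m*a+b) = (m*x0 + y0) + (m*a+b)" by (simp add: algebra_simps)
      also have "... = c + c" using cval bval by simp
      also have "... = 0" using c2[of c c] by simp
      finally have "y0 = m*x0+m*a+b" using c2 by blast
      then show ?thesis using mval by (simp add: algebra_simps)
    qed
    have yu: "b + \<delta>*a^q*u + \<delta>*(u*u^q) = y0" unfolding y0val uq u_def
      apply (subst c2) apply (simp add: algebra_simps frob_add) apply (simp add: nbs) done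
    have r0v: "r0 = \<delta>*x0^q*x0 + \<delta>*x0^q*a + b + \<alpha>*x0^2 + \<beta>*(x0*x0^q)"
      using y0val unfolding y0_def
      apply (subst (asm) c2) apply (subst c2) apply (simp add: algebra_simps) done
    have r0q: "r0^q = \<delta>*x0*x0^q + \<delta>*x0*a^q + b^q + \<alpha>^q*(x0^q)^2 + \<beta>^q*(x0^q*x0)"
      unfolding r0v by (simp add: frob_add power_mult_distrib frob_sq frob_frob \<delta>q)
    have "\<alpha>*u^2 + \<alpha>^q*(u^q)^2 + \<delta>*(u*u^q) = \<alpha>*a^2 + \<alpha>^q*(a^q)^2 + \<delta>*(a*a^q) + b + b^q"
    proof -
      have "(\<alpha>*u^2 + \<alpha>^q*(u^q)^2 + \<delta>*(u*u^q)) + (\<alpha>*a^2 + \<alpha>^q*(a^q)^2 + \<delta>*(a*a^q) + b + b^q) =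
        (\<delta>*x0^q*x0 + \<delta>*x0^q*a + b + \<alpha>*x0^2 + \<beta>*(x0*x0^q)) + (\<delta>*x0*x0^q + \<delta>*x0*a^q + b^q + \<alpha>^q*(x0^q)^2 + \<beta>^q*(x0^q*x0))"
        unfolding uq unfolding u_def \<delta>_def by (rule ident2)
      also have "... = r0 + r0^q" using r0v r0q by simp
      also have "... = 0" using r0 c2 by metis
      finally show ?thesis using c2 by blast
    qed
    then show ?thesis using x0' xu yu unfolding \<delta>_def by metis
  qed
qed

lemma ident3:
  fixes \<delta> u1 U1 d D t s k :: 'a
  shows "(\<delta>*((u1+t*d)*(U1+t*D)) + s*(u1+t*d) + k) + t*(\<delta>*((u1+d)*(U1+D)) + s*(u1+d) + k) + (1+t)*(\<delta>*(u1*U1) + s*u1 + k)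
     = \<delta>*(d*D)*(t*t + t)"
  apply (subst c2) apply (simp add: algebra_simps) apply (simp add: nbs) done

lemma three_pts:
  fixes \<delta> \<alpha> s k K u1 u2 u3 :: 'a
  assumes \<delta>0: "\<delta> \<noteq> 0" and \<delta>q: "\<delta>^q = \<delta>" and \<alpha>0: "\<alpha> \<noteq> 0"
    and eqN: "\<And>u. u \<in> {u1,u2,u3} \<Longrightarrow> \<delta>*(u*u^q) + s*u + k = 0"
    and eqQ: "\<And>u. u \<in> {u1,u2,u3} \<Longrightarrow> \<alpha>*u^2 + \<alpha>^q*(u^q)^2 + \<delta>*(u*u^q) = K"
    and d12: "u1 \<noteq> u2" and d13: "u1 \<noteq> u3" and d23: "u2 \<noteq> u3"
  shows False
proof -
  define d where "d = u2 + u1"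
  define d3 where "d3 = u3 + u1"
  have u2d: "u2 = u1 + d" unfolding d_def
    apply (subst c2) apply (simp add: algebra_simps) apply (simp add: nbs) done
  have u3d: "u3 = u1 + d3" unfolding d3_def
    apply (subst c2) apply (simp add: algebra_simps) apply (simp add: nbs) done
  have dn0: "d \<noteq> 0" using d12 c2 unfolding d_def by (metis add.commute)
  have d3n0: "d3 \<noteq> 0" using d13 c2 unfolding d3_def by (metis add.commute)
  have Nq: "(\<delta>*(u*u^q))^q = \<delta>*(u*u^q)" for u :: 'a
    by (simp add: power_mult_distrib \<delta>q frob_frob mult.commute)
  have diffN: "\<delta>*(v*v^q) + \<delta>*(u1*u1^q) = s*(v + u1)" if "v \<in> {u1,u2,u3}" for v
  proof -
    have "(\<delta>*(v*v^q) + \<delta>*(u1*u1^q)) + s*(v + u1) = (\<delta>*(v*v^q) + s*v + k) + (\<delta>*(u1*u1^q) + s*u1 + k)"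
      apply (subst c2) apply (simp add: algebra_simps) apply (simp add: nbs) done
    also have "... = 0" using eqN[OF that] eqN[of u1] by simp
    finally show ?thesis using c2 by blast
  qed
  obtain t where tq: "t^q = t" and td: "d3 = t*d"
  proof (cases "s = 0")
    case False
    define n2 where "n2 = \<delta>*(u2*u2^q) + \<delta>*(u1*u1^q)"
    define n3 where "n3 = \<delta>*(u3*u3^q) + \<delta>*(u1*u1^q)"
    have n2v: "n2 = s*d" using diffN[of u2] unfolding n2_def d_def by simp
    have n3v: "n3 = s*d3" using diffN[of u3] unfolding n3_def d3_def by simp
    have n2q: "n2^q = n2" unfolding n2_def by (simp add: frob_add Nq)
    have n3q: "n3^q = n3" unfolding n3_def by (simp add: frob_add Nq)
    have n20: "n2 \<noteq> 0" using n2v False dn0 by simp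
    show ?thesis
    proof (rule that[of "n3/n2"])
      show "(n3/n2)^q = n3/n2" by (simp add: power_divide n2q n3q)
      show "d3 = n3/n2*d" using n2v n3v False dn0 by (simp add: field_simps)
    qed
  next
    case True
    have Nall: "\<delta>*(v*v^q) = \<delta>*(u1*u1^q)" if "v \<in> {u1,u2,u3}" for v
      using diffN[OF that] True c2 by simp
    have pq: "(\<alpha>*(v + u1)^2)^q = \<alpha>*(v+u1)^2" if "v \<in> {u1,u2,u3}" for v
    proof -
      have e1: "\<alpha>*v^2 + \<alpha>^q*(v^q)^2 = \<alpha>*u1^2 + \<alpha>^q*(u1^q)^2"
      proof -
        have a1: "\<alpha>*v^2 + \<alpha>^q*(v^q)^2 + \<delta>*(u1*u1^q) = K" using eqQ[OF that] Nall[OF that] by simp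
        have a2: "\<alpha>*u1^2 + \<alpha>^q*(u1^q)^2 + \<delta>*(u1*u1^q) = K" using eqQ by simp
        show ?thesis using a1 a2 by (metis add_right_cancel)
      qed
      have "(\<alpha>*(v + u1)^2)^q + \<alpha>*(v+u1)^2 = (\<alpha>*v^2 + \<alpha>^q*(v^q)^2) + (\<alpha>*u1^2 + \<alpha>^q*(u1^q)^2)"
        apply (simp add: power_mult_distrib frob_sq frob_add)
        apply (subst c2) apply (simp add: algebra_simps power2_eq_square) apply (simp add: nbs) done
      also have "... = 0" using c2[THEN iffD1, OF e1] .
      finally show ?thesis using c2 by blast
    qed
    define p2 where "p2 = \<alpha>*d^2"
    define p3 where "p3 = \<alpha>*d3^2"
    have p2q: "p2^q = p2" using pq[of u2] unfolding p2_def d_def by simp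
    have p3q: "p3^q = p3" using pq[of u3] unfolding p3_def d3_def by simp
    define t where "t = d3/d"
    have tt: "t^2 = p3/p2" unfolding t_def p2_def p3_def using \<alpha>0 dn0
      by (simp add: field_simps power2_eq_square)
    have "(t^q)^2 = t^2"
    proof -
      have "(t^q)^2 = (t^2)^q" by (simp add: frob_sq)
      also have "... = t^2" unfolding tt by (simp add: power_divide p2q p3q)
      finally show ?thesis .
    qed
    then have "(t^q + t)^2 = 0" using sq_add2[OF two_F, of "t^q" t] c2[THEN iffD1] by simp
    then have "t^q + t = 0" by simp
    then have "t^q = t" using c2 by blast
    moreover have "d3 = t*d" unfolding t_def using dn0 by simp
    ultimately show ?thesis using that by blast
  qed
  define U1 where "U1 = u1^q"
  define D where "D = d^q"
  have D0: "D \<noteq> 0" unfolding D_def using dn0 q_pos by simp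
  have e1: "\<delta>*(u1*U1) + s*u1 + k = 0" using eqN[of u1] unfolding U1_def by simp
  have e2: "\<delta>*((u1+d)*(U1+D)) + s*(u1+d) + k = 0" using eqN[of u2] unfolding u2d U1_def D_def
    by (simp add: frob_add)
  have e3: "\<delta>*((u1+t*d)*(U1+t*D)) + s*(u1+t*d) + k = 0" using eqN[of u3] unfolding u3d td U1_def D_def
    by (simp add: frob_add power_mult_distrib tq)
  have "\<delta>*(d*D)*(t*t + t) = 0" using ident3[of \<delta> u1 t d U1 D s k] e1 e2 e3 by simp
  then have "t*t + t = 0" using \<delta>0 dn0 D0 by simp
  then have "t*(t+1) = 0" by (simp add: algebra_simps)
  then have "t = 0 \<or> t = 1" using c2[of t 1] by auto
  then show False
  proof
    assume "t = 0" then show False using td d3n0 by simp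
  next
    assume "t = 1" then show False using td u2d u3d d23 by simp
  qed
qed

lemma card3: fixes A :: "'b set" assumes "finite A" "2 < card A"
  shows "\<exists>x y z. x\<in>A \<and> y\<in>A \<and> z\<in>A \<and> x\<noteq>y \<and> x\<noteq>z \<and> y\<noteq>z"
proof -
  have "A \<noteq> {}" using assms(2) by (metis card.empty not_less_zero)
  then obtain x where x: "x \<in> A" by blast
  have c1: "1 < card (A - {x})" using assms x by (simp add: card_Diff_singleton)
  then have "A - {x} \<noteq> {}" by (metis card.empty not_less_zero)
  then obtain y where y: "y \<in> A - {x}" by blast
  have "0 < card (A - {x} - {y})" using c1 y assms by (simp add: card_Diff_singleton)
  then have "A - {x} - {y} \<noteq> {}" by (metis card.empty less_irrefl)
  then obtain z where z: "z \<in> A - {x} - {y}" by blast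
  show ?thesis using x y z by blast
qed

lemma arc_core:
  fixes \<delta> \<alpha> a b K :: 'a
  assumes \<delta>0: "\<delta> \<noteq> 0" and \<delta>q: "\<delta>^q = \<delta>" and \<alpha>0: "\<alpha> \<noteq> 0"
  shows "\<forall>L\<in>lines. card (L \<inter> {proj_pt (a+u, b + \<delta>*a^q*u + \<delta>*(u*u^q), 1) | u. \<alpha>*u^2 + \<alpha>^q*(u^q)^2 + \<delta>*(u*u^q) = K}) \<le> 2"
proof
  fix L :: "'a vec3 set set" assume L: "L \<in> lines"
  define pt where "pt u = proj_pt (a+u, b + \<delta>*a^q*u + \<delta>*(u*u^q), 1)" for u
  define S0 where "S0 = {pt u | u. \<alpha>*u^2 + \<alpha>^q*(u^q)^2 + \<delta>*(u*u^q) = K}"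
  show "card (L \<inter> {proj_pt (a+u, b + \<delta>*a^q*u + \<delta>*(u*u^q), 1) | u. \<alpha>*u^2 + \<alpha>^q*(u^q)^2 + \<delta>*(u*u^q) = K}) \<le> 2"
  proof (rule ccontr)
    assume "\<not> ?thesis"
    then have "2 < card (L \<inter> S0)" unfolding S0_def pt_def by (simp only: not_le)
    then obtain Y1 Y2 Y3 where Y: "Y1 \<in> L \<inter> S0" "Y2 \<in> L \<inter> S0" "Y3 \<in> L \<inter> S0"
      "Y1 \<noteq> Y2" "Y1 \<noteq> Y3" "Y2 \<noteq> Y3" using card3[of "L \<inter> S0", OF finite] by blast
    have memS: "\<exists>u. Y = pt u \<and> \<alpha>*u^2 + \<alpha>^q*(u^q)^2 + \<delta>*(u*u^q) = K" if "Y \<in> L \<inter> S0" for Y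
      using that unfolding S0_def by blast
    obtain u1 where u1: "Y1 = pt u1" "\<alpha>*u1^2 + \<alpha>^q*(u1^q)^2 + \<delta>*(u1*u1^q) = K" using memS[OF Y(1)] by blast
    obtain u2 where u2: "Y2 = pt u2" "\<alpha>*u2^2 + \<alpha>^q*(u2^q)^2 + \<delta>*(u2*u2^q) = K" using memS[OF Y(2)] by blast
    obtain u3 where u3: "Y3 = pt u3" "\<alpha>*u3^2 + \<alpha>^q*(u3^q)^2 + \<delta>*(u3*u3^q) = K" using memS[OF Y(3)] by blast
    note u = u1(1) u2(1) u3(1)
    note Qu = u1(2) u2(2) u3(2)
    have du: "u1 \<noteq> u2" "u1 \<noteq> u3" "u2 \<noteq> u3" using Y(4-6) u by blast+
    obtain l where l: "L = proj_line l" "l \<noteq> (0,0,0)" using L unfolding lines_def by blast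
    obtain l1 l2 l3 where l123: "l = (l1,l2,l3)" by (cases l) auto
    have on: "l1*(a+v) + l2*(b + \<delta>*a^q*v + \<delta>*(v*v^q)) + l3 = 0" if "v \<in> {u1,u2,u3}" for v
    proof -
      have "pt v \<in> L" using that Y(1-3) u by blast
      then show ?thesis unfolding pt_def l(1) l123 using on_line_iff[of "(a+v, b + \<delta>*a^q*v + \<delta>*(v*v^q), 1)"] by simp
    qed
    show False
    proof (cases "l2 = 0")
      case True
      have o1: "l1*(a+u1) + l3 = 0" using on[of u1] True by simp
      have o2: "l1*(a+u2) + l3 = 0" using on[of u2] True by simp
      have "l1 \<noteq> 0"
      proof
        assume z: "l1 = 0"
        then have "l3 = 0" using o1 by simp
        then have "l = (0,0,0)" using z True l123 by simp
        then show False using l(2) by simp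
      qed
      have "l1*(a+u1) + l3 = l1*(a+u2) + l3" using o1 o2 by simp
      then have "l1*(a+u1) = l1*(a+u2)" by simp
      then have "a+u1 = a+u2" using `l1 \<noteq> 0` by simp
      then show False using du by simp
    next
      case False
      define s where "s = l1/l2 + \<delta>*a^q"
      define k where "k = (l1*a + l3)/l2 + b"
      have eqN: "\<delta>*(v*v^q) + s*v + k = 0" if "v \<in> {u1,u2,u3}" for v
      proof -
        have "\<delta>*(v*v^q) + s*v + k = (l1*(a+v) + l2*(b + \<delta>*a^q*v + \<delta>*(v*v^q)) + l3)/l2"
          unfolding s_def k_def using False by (simp add: field_simps)
        then show ?thesis using on[OF that] by simp
      qed
      have eqQ: "\<alpha>*v^2 + \<alpha>^q*(v^q)^2 + \<delta>*(v*v^q) = K" if "v \<in> {u1,u2,u3}" for v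
        using that Qu by blast
      show False by (rule three_pts[OF \<delta>0 \<delta>q \<alpha>0 eqN eqQ du])
    qed
  qed
qed

lemma img_lin: fixes M :: "'b::field vec3 \<Rightarrow> 'b vec3"
  assumes "\<And>c v. M (scale3 c v) = scale3 c (M v)" shows "M ` proj_pt v = proj_pt (M v)"
  unfolding proj_pt_def image_image assms by simp

lemma pencil_core:
  fixes \<delta> a b :: 'a
  assumes \<delta>0: "\<delta> \<noteq> 0" and \<delta>q: "\<delta>^q = \<delta>"
  shows "\<exists>V0 Ls0. V0 \<in> line_inf \<and> baer_pencil q V0 Ls0 \<and>
     (\<forall>u. \<exists>L\<in>Ls0. proj_pt (a+u, b + \<delta>*a^q*u + \<delta>*(u*u^q), 1) \<in> L)"
proof -
  define M :: "'a vec3 \<Rightarrow> 'a vec3" where "M = (\<lambda>(x,y,z). (z, b*x + \<delta>*y, x))"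
  define Mi :: "'a vec3 \<Rightarrow> 'a vec3" where "Mi = (\<lambda>(x,y,z). (z, (y - b*z)/\<delta>, x))"
  define Mt :: "'a vec3 \<Rightarrow> 'a vec3" where "Mt = (\<lambda>(l1,l2,l3). (l3, l2/\<delta>, l1 - l2*b/\<delta>))"
  have sc: "M (scale3 c v) = scale3 c (M v)" for c v
    unfolding M_def by (cases v) (simp add: algebra_simps)
  have i1: "Mi (M v) = v" for v unfolding M_def Mi_def using \<delta>0 by (cases v) simp
  have i2: "M (Mi v) = v" for v unfolding M_def Mi_def using \<delta>0 by (cases v) simp
  have tr: "inner3 l (Mi v) = inner3 (Mt l) v" for l v
    unfolding Mi_def Mt_def using \<delta>0 by (cases l, cases v) (simp add: field_simps)
  define f0 where "f0 = (\<lambda>X. M ` X)"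
  have f0c: "collineation f0" unfolding f0_def by (rule lin_collineation[OF sc i1 i2 tr])
  have f0p: "f0 (proj_pt v) = proj_pt (M v)" for v unfolding f0_def by (rule img_lin[OF sc])
  define B0 where "B0 = f0 ` std_baer_subline q"
  define V0 where "V0 = proj_pt (1::'a, \<delta>*a^q, 0)"
  define Ls0 where "Ls0 = {L \<in> lines. V0 \<in> L \<and> (\<exists>Y\<in>B0. Y \<in> L)}"
  have V0inf: "V0 \<in> line_inf" unfolding V0_def line_inf_def using on_line_iff[of "(1::'a, \<delta>*a^q, 0)"] by simp
  have V0p: "V0 \<in> points" unfolding V0_def by (rule proj_pt_points) simp
  have instd: "proj_pt (x, y, 0) \<in> std_baer_subline q" if "x^q = x" "y^q = y" "(x,y) \<noteq> (0,0)" for x y :: 'a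
    unfolding std_baer_subline_def subfield_q_def using that by blast
  have bs: "baer_subline q B0" unfolding baer_subline_def B0_def using f0c by blast
  have nm: "\<forall>m\<in>lines. B0 \<subseteq> m \<longrightarrow> V0 \<notin> m"
  proof (intro ballI impI)
    fix m :: "'a vec3 set set" assume m: "m \<in> lines" "B0 \<subseteq> m"
    obtain l where l: "m = proj_line l" "l \<noteq> (0,0,0)" using m(1) unfolding lines_def by blast
    obtain m1 m2 m3 where l123: "l = (m1,m2,m3)" by (cases l) auto
    have "proj_pt (0::'a,1,0) \<in> std_baer_subline q" using instd[of 0 1] q_pos by simp
    then have "f0 (proj_pt (0,1,0)) \<in> m" using m(2) unfolding B0_def by blast
    then have "proj_pt (0, \<delta>, 0) \<in> m" unfolding f0p M_def by simp
    then have "m2*\<delta> = 0" unfolding l(1) l123 using on_line_iff[of "(0,\<delta>,0)"] \<delta>0 by simp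
    then have m2: "m2 = 0" using \<delta>0 by simp
    have "proj_pt (1::'a,0,0) \<in> std_baer_subline q" using instd[of 1 0] q_pos by simp
    then have "f0 (proj_pt (1,0,0)) \<in> m" using m(2) unfolding B0_def by blast
    then have "proj_pt (0, b, 1) \<in> m" unfolding f0p M_def by simp
    then have "m2*b + m3 = 0" unfolding l(1) l123 using on_line_iff[of "(0,b,1)"] by simp
    then have m3: "m3 = 0" using m2 by simp
    have m1: "m1 \<noteq> 0" using l(2) l123 m2 m3 by simp
    show "V0 \<notin> m"
    proof
      assume "V0 \<in> m"
      then have "m1 + m2*(\<delta>*a^q) = 0" unfolding V0_def l(1) l123 using on_line_iff[of "(1, \<delta>*a^q, 0)"] by simp
      then show False using m1 m2 by simp
    qed
  qed
  have cover: "\<exists>L\<in>Ls0. proj_pt (a+u, b + \<delta>*a^q*u + \<delta>*(u*u^q), 1) \<in> L" for u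
  proof -
    define t where "t = a^q*a + u*u^q"
    define k where "k = b + \<delta>*t"
    define L where "L = proj_line (\<delta>*a^q, 1, k)"
    have "(\<delta>*a^q, 1::'a, k) \<noteq> (0,0,0)" by simp
    then have Ll: "L \<in> lines" unfolding L_def lines_def by blast
    have "\<delta>*a^q*1 + 1*(\<delta>*a^q) + k*0 = 0" using c2[of "\<delta>*a^q" "\<delta>*a^q"] by simp
    then have VL: "V0 \<in> L" unfolding V0_def L_def using on_line_iff[of "(1, \<delta>*a^q, 0)"] by simp
    have "\<delta>*a^q*0 + 1*k + k*1 = 0" using c2[of k k] by simp
    then have YL: "proj_pt (0, k, 1) \<in> L" unfolding L_def using on_line_iff[of "(0, k, 1)"] by simp
    have tq: "t^q = t" unfolding t_def by (simp add: frob_add power_mult_distrib frob_frob mult.commute)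
    have "proj_pt (1, t, 0) \<in> std_baer_subline q" using instd[of 1 t] tq by simp
    moreover have "f0 (proj_pt (1, t, 0)) = proj_pt (0, k, 1)" unfolding f0p M_def k_def by simp
    ultimately have YB: "proj_pt (0, k, 1) \<in> B0" unfolding B0_def by force
    have "\<delta>*a^q*(a+u) + 1*(b + \<delta>*a^q*u + \<delta>*(u*u^q)) + k*1 = 0" unfolding k_def t_def
      apply (simp add: algebra_simps) apply (simp add: nbs) done
    then have PL: "proj_pt (a+u, b + \<delta>*a^q*u + \<delta>*(u*u^q), 1) \<in> L" unfolding L_def
      using on_line_iff[of "(a+u, b + \<delta>*a^q*u + \<delta>*(u*u^q), 1)"] by simp
    have "L \<in> Ls0" unfolding Ls0_def using Ll VL YL YB by blast
    then show ?thesis using PL by blast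
  qed
  have "baer_pencil q V0 Ls0" unfolding baer_pencil_def Ls0_def using V0p bs nm by blast
  then show ?thesis using V0inf cover by blast
qed

lemma main_core:
  fixes U :: "'a vec3 set set" and P :: "'a vec3 set"
  assumes nc: "nonclassical_orth_BM_unital q h U"
    and Pp: "P \<in> points" and Pinf: "P \<notin> line_inf"
  shows "(\<exists>V Ls. V \<in> line_inf \<and> baer_pencil q V Ls \<and> pedal U P \<subseteq> \<Union>Ls)
         \<and> is_arc (pedal U P)"
proof -
  obtain f \<alpha> \<beta> where f: "collineation f" and finf: "f ` line_inf = line_inf"
    and bq0: "\<beta> \<notin> subfield_q q" and \<alpha>0: "\<alpha> \<noteq> 0"
    and tr: "abs_trace h (\<alpha>^(q+1)/(\<beta>^q+\<beta>)^2) = 0" and U: "U = f ` BM_set q \<alpha> \<beta>"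
    using nc unfolding nonclassical_orth_BM_unital_def by blast
  have bq: "\<beta>^q \<noteq> \<beta>" using bq0 unfolding subfield_q_def by simp
  have fp: "f ` points = points" using f unfolding collineation_def bij_betw_def by blast
  have "P \<in> f ` points" using Pp fp by (simp only:)
  then obtain P0 where P0: "P0 \<in> points" "P = f P0" by blast
  have "P0 \<notin> line_inf"
  proof
    assume "P0 \<in> line_inf" then have "P \<in> f ` line_inf" using P0 by blast
    then show False using finf Pinf by (simp only:)
  qed
  then obtain a b where ab: "P0 = proj_pt (a,b,1)" using affine_rep[OF P0(1)] by blast
  define \<delta> where "\<delta> = \<beta>^q + \<beta>"
  have \<delta>0: "\<delta> \<noteq> 0" using bq c2[of "\<beta>^q" \<beta>] unfolding \<delta>_def by simp
  have \<delta>q: "\<delta>^q = \<delta>" unfolding \<delta>_def by (simp add: frob_add frob_frob add.commute)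
  define K where "K = \<alpha>*a^2 + \<alpha>^q*(a^q)^2 + \<delta>*(a*a^q) + b + b^q"
  define S0 where "S0 = {proj_pt (a+u, b + \<delta>*a^q*u + \<delta>*(u*u^q), 1) | u. \<alpha>*u^2 + \<alpha>^q*(u^q)^2 + \<delta>*(u*u^q) = K}"
  have S0p: "S0 \<subseteq> points"
  proof
    fix X assume "X \<in> S0"
    then obtain u where "X = proj_pt (a+u, b + \<delta>*a^q*u + \<delta>*(u*u^q), 1)" unfolding S0_def by blast
    then show "X \<in> points" using proj_pt_points[of "(a+u, b + \<delta>*a^q*u + \<delta>*(u*u^q), 1)"] by simp
  qed
  have U0p: "BM_set q \<alpha> \<beta> \<subseteq> points"
  proof
    fix X assume "X \<in> BM_set q \<alpha> \<beta>"
    then have "X = proj_pt (0,1,0) \<or> (\<exists>x r. X = proj_pt (x, \<alpha> * x^2 + \<beta> * x^(q+1) + r, 1))"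
      unfolding BM_set_def by blast
    then show "X \<in> points"
    proof
      assume "X = proj_pt (0,1,0)" then show ?thesis using proj_pt_points[of "(0,1,0)"] by simp
    next
      assume "\<exists>x r. X = proj_pt (x, \<alpha> * x^2 + \<beta> * x^(q+1) + r, 1)"
      then obtain x r where "X = proj_pt (x, \<alpha> * x^2 + \<beta> * x^(q+1) + r, 1)" by blast
      then show ?thesis using proj_pt_points[of "(x, \<alpha> * x^2 + \<beta> * x^(q+1) + r, 1)"] by simp
    qed
  qed
  have an: "\<And>w. w \<noteq> 0 \<Longrightarrow> \<alpha>*w^2 + \<alpha>^q*(w^q)^2 + (\<beta>^q+\<beta>)*(w*w^q) \<noteq> 0"
    using aniso[OF bq tr] by blast
  have ped0: "pedal (BM_set q \<alpha> \<beta>) P0 \<subseteq> S0"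
  proof
    fix Q0 assume "Q0 \<in> pedal (BM_set q \<alpha> \<beta>) P0"
    then have "\<exists>u. Q0 = proj_pt (a+u, b + (\<beta>^q+\<beta>)*a^q*u + (\<beta>^q+\<beta>)*(u*u^q), 1) \<and>
     \<alpha>*u^2 + \<alpha>^q*(u^q)^2 + (\<beta>^q+\<beta>)*(u*u^q) = \<alpha>*a^2 + \<alpha>^q*(a^q)^2 + (\<beta>^q+\<beta>)*(a*a^q) + b + b^q"
      using pedal_core[OF bq an] ab by blast
    then show "Q0 \<in> S0" unfolding S0_def K_def \<delta>_def by blast
  qed
  have ped: "pedal U P \<subseteq> f ` S0"
  proof -
    have "pedal U P \<subseteq> f ` pedal (BM_set q \<alpha> \<beta>) P0"
      unfolding U P0(2) by (rule pedal_image[OF f U0p P0(1)])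
    also have "... \<subseteq> f ` S0" using ped0 by blast
    finally show ?thesis .
  qed
  have arc: "is_arc (pedal U P)"
    by (rule arc_transfer[OF f S0p _ ped pedal_points]) (use arc_core[OF \<delta>0 \<delta>q \<alpha>0, of a b K] in \<open>simp add: S0_def\<close>)
  obtain V0 Ls0 where V0: "V0 \<in> line_inf" and bp: "baer_pencil q V0 Ls0"
    and cov: "\<forall>u. \<exists>L\<in>Ls0. proj_pt (a+u, b + \<delta>*a^q*u + \<delta>*(u*u^q), 1) \<in> L"
    using pencil_core[OF \<delta>0 \<delta>q, of a b] by blast
  have "S0 \<subseteq> \<Union>Ls0" unfolding S0_def using cov by blast
  then have "\<exists>V Ls. V \<in> line_inf \<and> baer_pencil q V Ls \<and> pedal U P \<subseteq> \<Union>Ls"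
    by (rule pencil_transfer[OF f finf V0 bp _ ped])
  then show ?thesis using arc by blast
qed

end

theorem theorem1p7:
  fixes U :: "('a::{field,finite}) vec3 set set" and P :: "'a vec3 set"
    and q h :: nat
  assumes "q = 2 ^ h" and "h \<ge> 1"
    and "card (UNIV :: 'a set) = q ^ 2"
    and "nonclassical_orth_BM_unital q h U"
    and "P \<in> points" and "P \<notin> U" and "P \<notin> line_inf"
  shows "(\<exists>V Ls. V \<in> line_inf \<and> baer_pencil q V Ls \<and> pedal U P \<subseteq> \<Union>Ls)
         \<and> is_arc (pedal U P)"
  using main_core[OF assms(1,2,3) assms(4,5,7)] .

end
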